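(* Let $M,N\in\mathbb{S}^{q+r}$. If there exist scalars $\alpha\in\mathbb{R}$ and $\beta>0$ such that $M-\alpha N\ge\begin{bmatrix}\beta I_q&0\\0&0\end{bmatrix}$ ( * ), then $\mathcal{Z}_r^0(N)\subseteq\mathcal{Z}_r^+(M)$. Moreover, if $N\in\boldsymbol{\Pi}_{q,r}$, $N\mid N_{22}=0$ and $M_{22}\le 0$, then $\mathcal{Z}_r^0(N)\subseteq\mathcal{Z}_r^+(M)$ if and only if there exist $\alpha\ge 0$ and $\beta>0$ such that ( * ) holds.
   Context: $\mathbb{S}^k$ denotes the real symmetric $k\times k$ matrices; for symmetric matrices, $A\ge 0$ ($A>0$) means positive semidefinite (definite), $A\le B$ means $B-A\ge0$. $A^\dagger$ is the Moore–Penrose pseudo-inverse. Any $\Pi\in\mathbb{S}^{q+r}$ (in particular $M,N$) is partitioned as $\Pi=\begin{bmatrix}\Pi_{11}&\Pi_{12}\\ \Pi_{21}&\Pi_{22}\end{bmatrix}$ with $\Pi_{11}\in\mathbb{S}^q$, $\Pi_{22}\in\mathbb{S}^r$. The generalized Schur complement is $\Pi\mid\Pi_{22}:=\Pi_{11}-\Pi_{12}\Pi_{22}^\dagger\Pi_{21}$. The set $\boldsymbol{\Pi}_{q,r}$ consists of all $\Pi\in\mathbb{S}^{q+r}$ with $\Pi_{22}\le 0$, $\Pi\mid\Pi_{22}\ge 0$ and $\ker\Pi_{22}\subseteq\ker\Pi_{12}$. Define $\mathcal{Z}_r^+(\Pi)=\{Z\in\mathbb{R}^{r\times q}:\begin{bmatrix}I_q\\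 Z\end{bmatrix}^\top\Pi\begin{bmatrix}I_q\\ Z\end{bmatrix}> 0\}$ and $\mathcal{Z}_r^0(\Pi)$ the same with $=0$. *)

theory Defs
  imports "HOL-Analysis.Analysis"
begin

text \<open>A (q+r)x(q+r) matrix has
  index type \<open>'q + 'r\<close>; rows/columns \<open>Inl i\<close> form the first block (size q),
  \<open>Inr j\<close> the second block (size r).\<close>

definition sym_mat :: "real^'n^'n \<Rightarrow> bool" where
  "sym_mat A \<longleftrightarrow> transpose A = A"

definition psd :: "real^'n^'n \<Rightarrow> bool" where
  "psd A \<longleftrightarrow> (\<forall>x. 0 \<le> x \<bullet> (A *v x))"

definition pd :: "real^'n^'n \<Rightarrow> bool" where
  "pd A \<longleftrightarrow> (\<forall>x. x \<noteq> 0 \<longrightarrow> 0 < x \<bullet> (A *v x))"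

definition loewner_le :: "real^'n^'n \<Rightarrow> real^'n^'n \<Rightarrow> bool" where
  "loewner_le A B \<longleftrightarrow> psd (B - A)"

definition pinv :: "real^'n^'m \<Rightarrow> real^'m^'n" where
  "pinv A = (THE X. A ** X ** A = A \<and> X ** A ** X = X \<and>
               transpose (A ** X) = A ** X \<and> transpose (X ** A) = X ** A)"

definition blk11 :: "real^('q::finite+'r::finite)^('q+'r) \<Rightarrow> real^'q^'q" where
  "blk11 P = (\<chi> i j. P $ Inl i $ Inl j)"
definition blk12 :: "real^('q::finite+'r::finite)^('q+'r) \<Rightarrow> real^'r^'q" where
  "blk12 P = (\<chi> i j. P $ Inl i $ Inr j)"
definition blk21 :: "real^('q::finite+'r::finite)^('q+'r) \<Rightarrow> real^'q^'r" where
  "blk21 P = (\<chi> i j. P $ Inr i $ Inl j)"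
definition blk22 :: "real^('q::finite+'r::finite)^('q+'r) \<Rightarrow> real^'r^'r" where
  "blk22 P = (\<chi> i j. P $ Inr i $ Inr j)"

definition schur :: "real^('q::finite+'r::finite)^('q+'r) \<Rightarrow> real^'q^'q" where
  "schur P = blk11 P - blk12 P ** pinv (blk22 P) ** blk21 P"

definition PiSet :: "(real^('q::finite+'r::finite)^('q+'r)) set" where
  "PiSet = {P. sym_mat P \<and> loewner_le (blk22 P) 0 \<and> loewner_le 0 (schur P) \<and>
                {x. blk22 P *v x = 0} \<subseteq> {x. blk12 P *v x = 0}}"

definition stackIZ :: "real^'q^'r \<Rightarrow> real^'q^('q+'r)" where
  "stackIZ Z = (\<chi> i j. case i of Inl a \<Rightarrow> (if a = j then 1 else 0) | Inr k \<Rightarrow> Z $ k $ j)"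

definition Zplus :: "real^('q::finite+'r::finite)^('q+'r) \<Rightarrow> (real^'q^'r) set" where
  "Zplus P = {Z. pd (transpose (stackIZ Z) ** P ** stackIZ Z)}"

definition Zzero :: "real^('q::finite+'r::finite)^('q+'r) \<Rightarrow> (real^'q^'r) set" where
  "Zzero P = {Z. transpose (stackIZ Z) ** P ** stackIZ Z = 0}"

definition betaI :: "real \<Rightarrow> real^('q::finite+'r::finite)^('q+'r)" where
  "betaI \<beta> = (\<chi> i j. case i of
       Inl a \<Rightarrow> (case j of Inl b \<Rightarrow> (if a = b then \<beta> else 0) | Inr _ \<Rightarrow> 0)
     | Inr _ \<Rightarrow> 0)"

end

theory Submission
  imports Defs "HOL-Analysis.Analysis"
begin



lemma sym_inner:
  fixes A :: "real^'n^'n"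
  assumes "transpose A = A"
  shows "(A *v x) \<bullet> y = x \<bullet> (A *v y)"
proof -
  have "x \<bullet> (A *v y) = (x v* A) \<bullet> y" by (simp add: dot_lmul_matrix)
  also have "x v* A = transpose A *v x" by simp
  finally show ?thesis using assms by simp
qed

lemma transpose_eqI:
  fixes B :: "real^'n^'n"
  assumes "\<And>u w. u \<bullet> (B *v w) = (B *v u) \<bullet> w"
  shows "transpose B = B"
proof -
  have "transpose B *v u = B *v u" for u
  proof -
    have "(transpose B *v u - B *v u) \<bullet> w = 0" for w
    proof -
      have "(transpose B *v u) \<bullet> w = u \<bullet> (B *v w)"
        by (simp add: dot_lmul_matrix)
      then show ?thesis using assms[of u w] by (simp add: inner_diff_left)
    qed
    from this[of "transpose B *v u - B *v u"] show ?thesis by simp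
  qed
  then show ?thesis by (simp add: matrix_eq)
qed

lemma penrose_unique:
  fixes A :: "real^'n^'m"
  assumes X: "A ** X ** A = A" "X ** A ** X = X" "transpose (A ** X) = A ** X" "transpose (X ** A) = X ** A"
  assumes Y: "A ** Y ** A = A" "Y ** A ** Y = Y" "transpose (A ** Y) = A ** Y" "transpose (Y ** A) = Y ** A"
  shows "X = Y"
proof -
  have "X = X ** (A ** X)" using X(2) by (simp add: matrix_mul_assoc)
  also have "\<dots> = X ** (transpose X ** transpose A)" using X(3) by (metis matrix_transpose_mul)
  also have "transpose A = transpose A ** transpose Y ** transpose A"
    using Y(1) by (metis matrix_transpose_mul matrix_mul_assoc)
  also have "X ** (transpose X ** (transpose A ** transpose Y ** transpose A))
     = X ** transpose (A ** X) ** transpose (A ** Y)"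
    by (simp add: matrix_transpose_mul matrix_mul_assoc)
  also have "\<dots> = (X ** A ** X) ** A ** Y" using X(3) Y(3) by (simp add: matrix_mul_assoc)
  finally have 1: "X = X ** A ** Y" using X(2) by simp
  have "Y = (Y ** A) ** Y" using Y(2) by simp
  also have "\<dots> = (transpose A ** transpose Y) ** Y" using Y(4) by (metis matrix_transpose_mul)
  also have "transpose A = transpose A ** transpose X ** transpose A"
    using X(1) by (metis matrix_transpose_mul matrix_mul_assoc)
  also have "(transpose A ** transpose X ** transpose A ** transpose Y) ** Y
     = transpose (X ** A) ** transpose (Y ** A) ** Y"
    by (simp add: matrix_transpose_mul matrix_mul_assoc)
  also have "\<dots> = X ** A ** (Y ** A ** Y)" using X(4) Y(4) by (simp add: matrix_mul_assoc)
  finally have 2: "Y = X ** A ** Y" using Y(2) by simp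
  show ?thesis using 1 2 by simp
qed




lemma pinv_sym_exists:
  fixes A :: "real^'n^'n"
  assumes sA: "transpose A = A"
  shows "\<exists>X. A ** X ** A = A \<and> X ** A ** X = X \<and> transpose (A ** X) = A ** X \<and> transpose (X ** A) = X ** A"
proof -
  define R where "R = range (\<lambda>x. A *v x)"
  have subR: "subspace R" unfolding R_def subspace_def
  proof (intro conjI ballI allI)
    show "0 \<in> range ((*v) A)" by (rule image_eqI[of _ _ 0]) auto
  next
    fix x y assume "x \<in> range ((*v) A)" "y \<in> range ((*v) A)"
    then obtain a b where "x = A *v a" "y = A *v b" by auto
    then show "x + y \<in> range ((*v) A)"
      by (auto simp: matrix_vector_right_distrib[symmetric])
  next
    fix c :: real and x assume "x \<in> range ((*v) A)"
    then obtain a where "x = A *v a" by auto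
    then show "c *\<^sub>R x \<in> range ((*v) A)"
      by (auto simp: matrix_vector_mult_scaleR[symmetric])
  qed
  have spanR: "span R = R" using subR by simp
  have symm: "(A *v x) \<bullet> y = x \<bullet> (A *v y)" for x y using sym_inner[OF sA] .
  have inR: "A *v x \<in> R" for x unfolding R_def by auto
  have orthker: "A *v z = 0" if "\<And>r. r \<in> R \<Longrightarrow> z \<bullet> r = 0" for z
  proof -
    have "z \<bullet> (A *v (A *v z)) = 0" using that inR by blast
    then have "(A *v z) \<bullet> (A *v z) = 0" by (simp add: symm)
    then show ?thesis by simp
  qed
  define P where "P y t \<longleftrightarrow> t \<in> R \<and> (\<forall>r\<in>R. (y - A *v t) \<bullet> r = 0)" for y t
  have ex: "\<exists>t. P y t" for y
  proof -
    obtain p z where p: "p \<in> span R" and z: "\<And>w. w \<in> span R \<Longrightarrow> orthogonal z w" and yz: "y = p + z"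
      using orthogonal_subspace_decomp_exists[of R y] by metis
    from p spanR obtain s where s: "p = A *v s" unfolding R_def by auto
    obtain t t2 where t: "t \<in> span R" and t2: "\<And>w. w \<in> span R \<Longrightarrow> orthogonal t2 w" and st: "s = t + t2"
      using orthogonal_subspace_decomp_exists[of R s] by metis
    have "A *v t2 = 0" using t2 spanR by (intro orthker) (auto simp: orthogonal_def)
    then have "A *v t = p" using s st by (simp add: matrix_vector_right_distrib)
    then show ?thesis unfolding P_def using t z spanR yz by (auto simp: orthogonal_def)
  qed
  have uniq: "t = t'" if "P y t" "P y t'" for y t t'
  proof -
    have "(A *v (t - t')) \<bullet> r = 0" if "r \<in> R" for r
    proof -
      have "(y - A *v t) \<bullet> r = 0" "(y - A *v t') \<bullet> r = 0" using \<open>P y t\<close> \<open>P y t'\<close> that P_def by auto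
      then show ?thesis by (simp add: matrix_vector_mult_diff_distrib inner_diff_left)
    qed
    then have "(A *v (t - t')) \<bullet> (A *v (t - t')) = 0" using inR by blast
    then have k: "A *v (t - t') = 0" by simp
    have "t - t' \<in> R" using that P_def subR by (auto intro: subspace_diff)
    then obtain s where "t - t' = A *v s" unfolding R_def by auto
    then have "(t - t') \<bullet> (t - t') = (A *v (t - t')) \<bullet> s" by (simp add: symm)
    with k have "(t - t') \<bullet> (t - t') = 0" by simp
    then show ?thesis by simp
  qed
  define g where "g y = (SOME t. P y t)" for y
  have gP: "P y (g y)" for y unfolding g_def using ex by (rule someI_ex)
  have gI: "g y = t" if "P y t" for y t using uniq[OF gP that] .
  have lin: "linear g"
  proof (rule linearI)
    fix x y
    show "g (x + y) = g x + g y"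
    proof (rule gI)
      show "P (x + y) (g x + g y)" using gP[of x] gP[of y] subR unfolding P_def
        by (auto simp: subspace_add matrix_vector_right_distrib inner_diff_left inner_add_left algebra_simps)
    qed
  next
    fix c :: real and x
    show "g (c *\<^sub>R x) = c *\<^sub>R g x"
    proof (rule gI)
      have e: "c *\<^sub>R x - A *v (c *\<^sub>R g x) = c *\<^sub>R (x - A *v g x)"
        by (simp add: algebra_simps matrix_vector_mult_scaleR)
      show "P (c *\<^sub>R x) (c *\<^sub>R g x)" using gP[of x] subR unfolding P_def e
        by (auto simp: subspace_scale)
    qed
  qed
  define X where "X = matrix g"
  have Xg: "X *v y = g y" for y
    unfolding X_def using lin by (simp add: matrix_works linear_matrix_vector_mul_eq)
  have gR: "g y \<in> R" for y using gP P_def by auto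
  have gorth: "(y - A *v g y) \<bullet> r = 0" if "r \<in> R" for y r using gP P_def that by auto
  have AgA: "A *v g (A *v y) = A *v y" for y
  proof -
    have "(A *v y - A *v g (A *v y)) \<bullet> (A *v y - A *v g (A *v y)) = 0"
      using gorth[of "A *v y - A *v g (A *v y)" "A *v y"] inR[of "y - g (A *v y)"]
      by (simp add: matrix_vector_mult_diff_distrib)
    then show ?thesis by simp
  qed
  have kerorth: "k \<bullet> r = 0" if "A *v k = 0" "r \<in> R" for k r
  proof -
    from that obtain s where "r = A *v s" unfolding R_def by auto
    then show ?thesis using that symm[of k s] by simp
  qed
  have 1: "A ** X ** A = A"
    by (simp add: matrix_eq Xg AgA matrix_vector_mul_assoc[symmetric])
  have 2: "X ** A ** X = X"
  proof -
    have "g (A *v g y) = g y" for y by (rule gI) (use gR P_def in auto)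
    then show ?thesis by (simp add: matrix_eq Xg matrix_vector_mul_assoc[symmetric])
  qed
  have 3: "transpose (A ** X) = A ** X"
  proof (rule transpose_eqI)
    fix u w
    have a: "u \<bullet> (A *v g w) = (A *v g u) \<bullet> (A *v g w)"
    proof -
      have "(u - A *v g u) \<bullet> (A *v g w) = 0" using gorth inR by blast
      then show ?thesis by (simp add: inner_diff_left)
    qed
    have b: "(A *v g u) \<bullet> w = (A *v g u) \<bullet> (A *v g w)"
    proof -
      have "(w - A *v g w) \<bullet> (A *v g u) = 0" using gorth inR by blast
      then have "(A *v g u) \<bullet> (w - A *v g w) = 0" by (simp only: inner_commute)
      then show ?thesis by (simp add: inner_diff_right)
    qed
    show "u \<bullet> ((A ** X) *v w) = ((A ** X) *v u) \<bullet> w"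
      using a b by (simp add: Xg matrix_vector_mul_assoc[symmetric])
  qed
  have 4: "transpose (X ** A) = X ** A"
  proof (rule transpose_eqI)
    fix u w
    have k: "A *v (u - g (A *v u)) = 0" for u
      using AgA[of u] by (simp add: matrix_vector_mult_diff_distrib)
    have a: "u \<bullet> g (A *v w) = g (A *v u) \<bullet> g (A *v w)"
    proof -
      have "(u - g (A *v u)) \<bullet> g (A *v w) = 0" using kerorth[OF k gR] .
      then show ?thesis by (simp add: inner_diff_left)
    qed
    have b: "g (A *v u) \<bullet> w = g (A *v u) \<bullet> g (A *v w)"
    proof -
      have "(w - g (A *v w)) \<bullet> g (A *v u) = 0" using kerorth[OF k gR] .
      then have "g (A *v u) \<bullet> (w - g (A *v w)) = 0" by (simp only: inner_commute)
      then show ?thesis by (simp add: inner_diff_right)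
    qed
    show "u \<bullet> ((X ** A) *v w) = ((X ** A) *v u) \<bullet> w"
      using a b by (simp add: Xg matrix_vector_mul_assoc[symmetric])
  qed
  show ?thesis using 1 2 3 4 by blast
qed

lemma pinv_sym:
  fixes A :: "real^'n^'n"
  assumes sA: "transpose A = A"
  shows "A ** pinv A ** A = A"
proof -
  obtain X where X: "A ** X ** A = A \<and> X ** A ** X = X \<and> transpose (A ** X) = A ** X \<and> transpose (X ** A) = X ** A"
    using pinv_sym_exists[OF sA] by blast
  have "pinv A = X" unfolding pinv_def
    by (rule the1_equality) (use X penrose_unique in blast)+
  then show ?thesis using X by simp
qed




definition inlv :: "real^'q \<Rightarrow> real^('q::finite+'r::finite)" where
  "inlv u = (\<chi> a. case a of Inl i \<Rightarrow> u $ i | Inr _ \<Rightarrow> 0)"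
definition inrv :: "real^'r \<Rightarrow> real^('q::finite+'r::finite)" where
  "inrv v = (\<chi> a. case a of Inl _ \<Rightarrow> 0 | Inr j \<Rightarrow> v $ j)"
definition plv :: "real^('q::finite+'r::finite) \<Rightarrow> real^'q" where
  "plv x = (\<chi> i. x $ Inl i)"
definition prv :: "real^('q::finite+'r::finite) \<Rightarrow> real^'r" where
  "prv x = (\<chi> j. x $ Inr j)"

lemma sum_plus_univ:
  "(\<Sum>a\<in>(UNIV::('q::finite+'r::finite) set). f a) = (\<Sum>i\<in>UNIV. f (Inl i)) + (\<Sum>j\<in>UNIV. f (Inr j))"
proof -
  have "(\<Sum>a\<in>(UNIV::('q+'r) set). f a) = sum f (UNIV <+> UNIV)" by simp
  also have "\<dots> = (\<Sum>i\<in>UNIV. f (Inl i)) + (\<Sum>j\<in>UNIV. f (Inr j))"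
    by (subst sum.Plus) (simp_all add: o_def)
  finally show ?thesis .
qed

lemma decomp: "x = inlv (plv x) + inrv (prv x)"
  by (simp add: vec_eq_iff inlv_def inrv_def plv_def prv_def split: sum.splits)

lemma pl_simps[simp]:
  "plv (inlv u) = u" "prv (inlv u) = 0" "plv (inrv v) = 0" "prv (inrv v) = v"
  "plv (x + y) = plv x + plv y" "prv (x + y) = prv x + prv y"
  "plv (x - y) = plv x - plv y" "prv (x - y) = prv x - prv y"
  "plv (c *\<^sub>R x) = c *\<^sub>R plv x" "prv (c *\<^sub>R x) = c *\<^sub>R prv x"
  "plv 0 = 0" "prv 0 = 0"
  by (simp_all add: vec_eq_iff inlv_def inrv_def plv_def prv_def)

lemma inl_simps[simp]:
  "inlv (u + u') = inlv u + inlv u'" "inrv (v + v') = inrv v + inrv v'"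
  "inlv (u - u') = inlv u - inlv u'" "inrv (v - v') = inrv v - inrv v'"
  "inlv (c *\<^sub>R u) = c *\<^sub>R inlv u" "inrv (c *\<^sub>R v) = c *\<^sub>R inrv v"
  "inlv 0 = 0" "inrv 0 = 0" "inlv (- u) = - inlv u" "inrv (- v) = - inrv v"
  by (simp_all add: vec_eq_iff inlv_def inrv_def split: sum.splits)



lemma inner_inl: "inlv u \<bullet> y = u \<bullet> plv y"
  by (simp add: inner_vec_def sum_plus_univ inlv_def plv_def)
lemma inner_inr: "inrv v \<bullet> y = v \<bullet> prv y"
  by (simp add: inner_vec_def sum_plus_univ inrv_def prv_def)

lemma inner_split: "x \<bullet> y = plv x \<bullet> plv y + prv x \<bullet> prv y"
  by (subst decomp[of x]) (simp add: inner_add_left inner_inl inner_inr)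

lemma norm_pl: "norm (plv x) \<le> norm x"
proof -
  have "plv x \<bullet> plv x \<le> x \<bullet> x" by (simp add: inner_split[of x x])
  then show ?thesis by (simp add: norm_eq_sqrt_inner)
qed

lemma blk_mult:
  fixes A :: "real^('q::finite+'r::finite)^('q+'r)"
  shows "plv (A *v inlv u) = blk11 A *v u" "prv (A *v inlv u) = blk21 A *v u"
        "plv (A *v inrv v) = blk12 A *v v" "prv (A *v inrv v) = blk22 A *v v"
  by (simp_all add: vec_eq_iff plv_def prv_def inlv_def inrv_def blk11_def blk12_def blk21_def blk22_def
        matrix_vector_mult_def sum_plus_univ)

lemma bilin_blocks:
  fixes A :: "real^('q::finite+'r::finite)^('q+'r)"
  shows "y \<bullet> (A *v x) = plv y \<bullet> (blk11 A *v plv x) + prv y \<bullet> (blk21 A *v plv x)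
                      + plv y \<bullet> (blk12 A *v prv x) + prv y \<bullet> (blk22 A *v prv x)"
proof -
  have "A *v x = A *v inlv (plv x) + A *v inrv (prv x)"
    by (subst decomp[of x]) (simp add: matrix_vector_right_distrib)
  then show ?thesis by (simp add: inner_split[of y] inner_add_right blk_mult)
qed



lemma delta_sum: "(\<Sum>j\<in>(UNIV::'a::finite set). (if a = j then c else 0) * (t j::real)) = c * t a"
proof -
  have "(\<Sum>j\<in>(UNIV::'a set). (if a = j then c else 0) * t j) = (\<Sum>j\<in>UNIV. if a = j then c * t j else 0)"
    by (rule sum.cong) auto
  then show ?thesis by simp
qed

lemma stack_mult: "stackIZ Z *v y = inlv y + inrv (Z *v y)"
proof -
  have "(stackIZ Z *v y) $ a = (inlv y + inrv (Z *v y)) $ a" for a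
    by (cases a) (simp_all add: stackIZ_def inlv_def inrv_def matrix_vector_mult_def delta_sum)
  then show ?thesis by (simp add: vec_eq_iff)
qed

lemma betaI_mult: "betaI b *v x = b *\<^sub>R inlv (plv x)"
proof -
  have "(betaI b *v x) $ a = (b *\<^sub>R inlv (plv x)) $ a" for a
    by (cases a) (simp_all add: betaI_def inlv_def plv_def matrix_vector_mult_def sum_plus_univ delta_sum)
  then show ?thesis by (simp add: vec_eq_iff)
qed

lemma sym_blk:
  fixes A :: "real^('q::finite+'r::finite)^('q+'r)"
  assumes "sym_mat A"
  shows "blk12 A = transpose (blk21 A)" "transpose (blk22 A) = blk22 A"
proof -
  have e: "A $ i $ j = A $ j $ i" for i j
  proof -
    have "transpose A $ j $ i = A $ j $ i" using assms unfolding sym_mat_def by simp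
    then show ?thesis unfolding transpose_def by simp
  qed
  have e1: "A $ Inl i $ Inr j = A $ Inr j $ Inl i" for i j by (rule e)
  have e2: "A $ Inr i $ Inr j = A $ Inr j $ Inr i" for i j by (rule e)
  show "blk12 A = transpose (blk21 A)"
    unfolding vec_eq_iff blk12_def blk21_def transpose_def by (simp add: e1)
  show "transpose (blk22 A) = blk22 A"
    unfolding vec_eq_iff blk22_def transpose_def by (simp add: e2[of _ _])
qed

lemma quad_transform:
  fixes A :: "real^'m^'m" and S :: "real^'n^'m"
  shows "y \<bullet> ((transpose S ** A ** S) *v x) = (S *v y) \<bullet> (A *v (S *v x))"
proof -
  have "y \<bullet> ((transpose S ** A ** S) *v x) = y \<bullet> (transpose S *v (A *v (S *v x)))"
    by (simp add: matrix_vector_mul_assoc matrix_mul_assoc)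
  also have "\<dots> = (S *v y) \<bullet> (A *v (S *v x))"
    by (metis dot_lmul_matrix inner_commute transpose_matrix_vector)
  finally show ?thesis .
qed




lemma smult_mv: "((c::real) *\<^sub>R (A::real^'n^'m)) *v x = c *\<^sub>R (A *v x)"
proof -
  have e: "((c::real) *\<^sub>R A) $ i $ j = c * A $ i $ j" for i j by simp
  show ?thesis by (simp add: vec_eq_iff matrix_vector_mult_def e sum_distrib_left mult.assoc)
qed

lemma neg_mv: "(- A) *v x = - (A *v (x::real^'n))"
  by (simp add: vec_eq_iff matrix_vector_mult_def sum_negf)

lemma inner_transpose: "(a::real^'n) \<bullet> (transpose K *v z) = (K *v a) \<bullet> z"
  by (metis dot_lmul_matrix inner_commute transpose_matrix_vector)

lemma RL1:
  fixes a b :: real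
  assumes "\<And>t. 0 \<le> b * t + a * t^2"
  shows "b = 0"
proof (rule ccontr)
  assume b: "b \<noteq> 0"
  define d where "d = \<bar>a\<bar> + 1"
  have d: "d > 0" "a - d < 0" unfolding d_def by auto
  define s where "s = b / d"
  have e1: "(s * b) * ((a - d)/d) = a * s * s - s * b" using d unfolding s_def by (simp add: field_simps)
  have e2: "b * (-s) + a * (-s)^2 = a * s * s - s * b" by (simp add: power2_eq_square)
  have "s * b > 0" unfolding s_def using b d by (auto simp: field_simps zero_less_mult_iff linorder_neq_iff)
  moreover have "(a - d)/d < 0" using d by (simp add: divide_neg_pos)
  ultimately have "(s * b) * ((a - d)/d) < 0" by (rule mult_pos_neg)
  moreover have "0 \<le> b * (-s) + a * (-s)^2" by (rule assms)
  ultimately show False using e1 e2 by linarith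
qed

lemma RL2:
  fixes a b c :: real
  assumes "\<And>t. 0 < c + b * t + a * t^2" "a \<le> 0"
  shows "a = 0 \<and> b = 0"
proof -
  have a0: "a = 0"
  proof (rule ccontr)
    assume "a \<noteq> 0" then have a: "a < 0" using assms(2) by simp
    define t where "t = max 1 ((\<bar>b\<bar> + \<bar>c\<bar>) / (- a))"
    have t1: "t \<ge> 1" unfolding t_def by simp
    have t2: "t * (- a) \<ge> \<bar>b\<bar> + \<bar>c\<bar>"
    proof -
      have "t \<ge> (\<bar>b\<bar> + \<bar>c\<bar>) / (- a)" unfolding t_def by simp
      then show ?thesis using a by (simp add: field_simps)
    qed
    have "c + b * t + a * t^2 \<le> \<bar>c\<bar> * t + \<bar>b\<bar> * t + a * t^2"
    proof -
      have "\<bar>c\<bar> * 1 \<le> \<bar>c\<bar> * t" by (rule mult_left_mono[OF t1]) simp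
      then have "c \<le> \<bar>c\<bar> * t" using abs_ge_self[of c] by linarith
      moreover have "b * t \<le> \<bar>b\<bar> * t" using t1 by (simp add: mult_right_mono)
      ultimately show ?thesis by simp
    qed
    also have "\<dots> = t * (\<bar>c\<bar> + \<bar>b\<bar> - t * (- a))" by (simp add: algebra_simps power2_eq_square)
    also have "\<dots> \<le> 0" using t1 t2 by (intro mult_nonneg_nonpos) auto
    finally show False using assms(1)[of t] by simp
  qed
  have "b = 0"
  proof (rule ccontr)
    assume b: "b \<noteq> 0"
    have "0 < c + b * (- c / b) + a * (- c / b)^2" by (rule assms(1))
    then show False using a0 b by simp
  qed
  with a0 show ?thesis by simp
qed

lemma psd_zero:
  fixes A :: "real^'n^'n"
  assumes sA: "transpose A = A" and p: "\<And>y. 0 \<le> y \<bullet> (A *v y)" and z: "x \<bullet> (A *v x) = 0"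
  shows "A *v x = 0"
proof -
  have "y \<bullet> (A *v x) = 0" for y
  proof -
    have "0 \<le> (2 * (y \<bullet> (A *v x))) * t + (y \<bullet> (A *v y)) * t^2" for t
    proof -
      have "(x + t *\<^sub>R y) \<bullet> (A *v (x + t *\<^sub>R y)) = x \<bullet> (A *v x) + t * (x \<bullet> (A *v y)) + t * (y \<bullet> (A *v x)) + t^2 * (y \<bullet> (A *v y))"
        by (simp add: matrix_vector_right_distrib matrix_vector_mult_scaleR inner_add_left inner_add_right algebra_simps power2_eq_square)
      moreover have "x \<bullet> (A *v y) = y \<bullet> (A *v x)"
        using sym_inner[OF sA, of x y] by (simp add: inner_commute)
      ultimately have "(x + t *\<^sub>R y) \<bullet> (A *v (x + t *\<^sub>R y)) = (2 * (y \<bullet> (A *v x))) * t + (y \<bullet> (A *v y)) * t^2"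
        using z by (simp add: algebra_simps)
      then show ?thesis using p[of "x + t *\<^sub>R y"] by simp
    qed
    then have "2 * (y \<bullet> (A *v x)) = 0" by (rule RL1)
    then show ?thesis by simp
  qed
  from this[of "A *v x"] show ?thesis by simp
qed

lemma nsd_zero:
  fixes A :: "real^'n^'n"
  assumes sA: "transpose A = A" and p: "\<And>y. y \<bullet> (A *v y) \<le> 0" and z: "x \<bullet> (A *v x) = 0"
  shows "A *v x = 0"
proof -
  have "(- A) *v x = 0"
  proof (rule psd_zero)
    show "transpose (- A) = - A" using sA by (simp add: vec_eq_iff transpose_def)
    show "0 \<le> y \<bullet> (- A *v y)" for y using p[of y] by (simp add: neg_mv)
    show "x \<bullet> (- A *v x) = 0" using z by (simp add: neg_mv)
  qed
  then show ?thesis by (simp add: neg_mv)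
qed




lemma subspace_range_mv: "subspace (range ((*v) (A::real^'n^'m)))"
  unfolding subspace_def
proof (intro conjI ballI allI)
  show "0 \<in> range ((*v) A)" by (rule image_eqI[of _ _ 0]) auto
next
  fix x y assume "x \<in> range ((*v) A)" "y \<in> range ((*v) A)"
  then obtain a b where "x = A *v a" "y = A *v b" by auto
  then show "x + y \<in> range ((*v) A)"
    by (auto simp: matrix_vector_right_distrib[symmetric])
next
  fix c :: real and x assume "x \<in> range ((*v) A)"
  then obtain a where "x = A *v a" by auto
  then show "c *\<^sub>R x \<in> range ((*v) A)"
    by (auto simp: matrix_vector_mult_scaleR[symmetric])
qed

lemma range_sym:
  fixes A :: "real^'n^'n"
  assumes sA: "transpose A = A" and k: "\<And>k. A *v k = 0 \<Longrightarrow> z \<bullet> k = 0"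
  shows "\<exists>s. z = A *v s"
proof -
  define R where "R = range ((*v) A)"
  have spanR: "span R = R" unfolding R_def using subspace_range_mv by simp
  obtain p q where p: "p \<in> span R" and q: "\<And>w. w \<in> span R \<Longrightarrow> orthogonal q w" and zpq: "z = p + q"
    using orthogonal_subspace_decomp_exists[of R z] by metis
  have "q \<bullet> (A *v (A *v q)) = 0" using q spanR unfolding R_def orthogonal_def by auto
  then have "(A *v q) \<bullet> (A *v q) = 0" by (simp add: sym_inner[OF sA])
  then have "A *v q = 0" by simp
  then have "z \<bullet> q = 0" by (rule k)
  moreover have "p \<bullet> q = 0" using q[OF p] by (simp add: orthogonal_def inner_commute)
  ultimately have "q \<bullet> q = 0" using zpq by (simp add: inner_add_left)
  then have "q = 0" by simp
  then show ?thesis using p spanR zpq unfolding R_def by auto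
qed

lemma subspace_ker: "subspace {v. (B::real^'n^'m) *v v = 0}"
  unfolding subspace_def
  by (simp add: matrix_vector_right_distrib matrix_vector_mult_scaleR)

lemma quad_inv:
  fixes A :: "real^'n^'n"
  assumes sA: "transpose A = A" and e: "A *v e = 0"
  shows "(x + e) \<bullet> (A *v (x + e)) = x \<bullet> (A *v x)"
proof -
  have "e \<bullet> (A *v x) = (A *v e) \<bullet> x" by (simp add: sym_inner[OF sA])
  then show ?thesis using e by (simp add: matrix_vector_right_distrib inner_add_left)
qed

lemma rank1_mv:
  fixes w :: "real^'r" and u :: "real^'q"
  shows "(\<chi> i j. w $ i * u $ j / (u \<bullet> u)) *v y = ((u \<bullet> y) / (u \<bullet> u)) *\<^sub>R w"
  by (simp add: vec_eq_iff matrix_vector_mult_def inner_vec_def sum_divide_distrib sum_distrib_left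
      algebra_simps)




lemma inner_vmul: "(a::real^'n) \<bullet> (z v* K) = (K *v a) \<bullet> z"
  by (metis dot_lmul_matrix inner_commute)

lemma main_dir:
  fixes M N :: "real^('q::finite + 'r::finite)^('q + 'r)"
  assumes sM: "sym_mat M" and sN: "sym_mat N" and NPi: "N \<in> PiSet" and sch: "schur N = 0"
    and M22: "loewner_le (blk22 M) 0" and H: "Zzero N \<subseteq> Zplus M"
  shows "\<exists>\<alpha> \<beta>. \<alpha> \<ge> 0 \<and> \<beta> > 0 \<and> loewner_le (betaI \<beta>) (M - \<alpha> *\<^sub>R N)"
proof -
  define N11 where "N11 = blk11 N"
  define N12 where "N12 = blk12 N"
  define N21 where "N21 = blk21 N"
  define N22 where "N22 = blk22 N"
  define G where "G = pinv N22"
  define K where "K = G ** N21"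
  have tM: "transpose M = M" using sM sym_mat_def by auto
  have tN: "transpose N = N" using sN sym_mat_def by auto
  have s22: "transpose N22 = N22" unfolding N22_def using sym_blk[OF sN] by simp
  have s12: "N12 = transpose N21" unfolding N12_def N21_def using sym_blk[OF sN] by simp
  have nsd22: "v \<bullet> (N22 *v v) \<le> 0" for v
    using NPi unfolding PiSet_def loewner_le_def psd_def N22_def
    by (auto simp: neg_mv)
  have kerc: "N12 *v v = 0" if "N22 *v v = 0" for v
    using NPi that unfolding PiSet_def N12_def N22_def by auto
  have pinvN: "N22 ** G ** N22 = N22" unfolding G_def using pinv_sym[OF s22] .
  have rng: "\<exists>s. N21 *v u = N22 *v s" for u
  proof (rule range_sym[OF s22])
    fix k assume "N22 *v k = 0"
    then have "N12 *v k = 0" by (rule kerc)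
    then show "(N21 *v u) \<bullet> k = 0" using inner_transpose[of u N21 k] s12
      by (simp add: inner_commute)
  qed
  have NK: "N22 ** K = N21"
  proof -
    have "(N22 ** K) *v u = N21 *v u" for u
    proof -
      obtain s where s: "N21 *v u = N22 *v s" using rng by blast
      have "(N22 ** K) *v u = N22 *v (G *v (N22 *v s))"
        unfolding K_def by (simp add: matrix_vector_mul_assoc[symmetric] s)
      also have "\<dots> = (N22 ** G ** N22) *v s" by (simp add: matrix_vector_mul_assoc matrix_mul_assoc)
      finally show ?thesis using pinvN s by simp
    qed
    then show ?thesis by (simp add: matrix_eq)
  qed
  have N12K: "N12 = transpose K ** N22"
    unfolding s12 NK[symmetric] by (simp add: matrix_transpose_mul s22)
  have N11K: "N11 = transpose K ** N22 ** K"
  proof -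
    have "N11 = N12 ** G ** N21" using sch unfolding schur_def N11_def N12_def N21_def N22_def G_def
      by simp
    also have "\<dots> = transpose K ** (N22 ** G ** N22) ** K"
      unfolding N12K NK[symmetric] by (simp add: matrix_mul_assoc)
    finally show ?thesis using pinvN by simp
  qed
  define wf where "wf x = K *v plv x + prv x" for x :: "real^('q+'r)"
  have BN: "y \<bullet> (N *v x) = wf y \<bullet> (N22 *v wf x)" for x y
  proof -
    have "y \<bullet> (N *v x) = plv y \<bullet> (N11 *v plv x) + prv y \<bullet> (N21 *v plv x)
                      + plv y \<bullet> (N12 *v prv x) + prv y \<bullet> (N22 *v prv x)"
      unfolding N11_def N12_def N21_def N22_def by (rule bilin_blocks)
    also have "\<dots> = (K *v plv y) \<bullet> (N22 *v (K *v plv x)) + prv y \<bullet> (N22 *v (K *v plv x))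
                      + (K *v plv y) \<bullet> (N22 *v prv x) + prv y \<bullet> (N22 *v prv x)"
      unfolding N11K N12K NK[symmetric]
      by (simp add: matrix_vector_mul_assoc[symmetric] inner_vmul)
    also have "\<dots> = wf y \<bullet> (N22 *v wf x)"
      unfolding wf_def by (simp add: matrix_vector_right_distrib inner_add_left inner_add_right)
    finally show ?thesis .
  qed
  have qN: "x \<bullet> (N *v x) \<le> 0" for x using BN nsd22 by simp
  define kerP where "kerP = {v. N22 *v v = 0}"
  have NkerP: "N *v inrv v0 = 0" if "v0 \<in> kerP" for v0
  proof -
    have "N *v inrv v0 = inlv (plv (N *v inrv v0)) + inrv (prv (N *v inrv v0))" by (rule decomp)
    also have "\<dots> = 0" using that kerc unfolding kerP_def
      by (simp add: blk_mult N12_def[symmetric] N22_def[symmetric])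
    finally show ?thesis .
  qed
  have stepA: "0 < x \<bullet> (M *v x)" if u: "u \<noteq> 0" and w: "w \<in> kerP" and x: "x = inlv u + inrv (w - K *v u)" for u w x
  proof -
    define Z where "Z = (\<chi> i j. w $ i * u $ j / (u \<bullet> u)) - K"
    have Zy: "Z *v y = ((u \<bullet> y) / (u \<bullet> u)) *\<^sub>R w - K *v y" for y
      unfolding Z_def by (simp add: matrix_vector_mult_diff_rdistrib rank1_mv)
    have "Z \<in> Zzero N"
    proof -
      have "(transpose (stackIZ Z) ** N ** stackIZ Z) *v y = 0" for y
      proof -
        define c where "c = (transpose (stackIZ Z) ** N ** stackIZ Z) *v y"
        have "c \<bullet> c = (stackIZ Z *v c) \<bullet> (N *v (stackIZ Z *v y))"
          unfolding c_def by (rule quad_transform)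
        also have "\<dots> = 0"
        proof -
          have "wf (stackIZ Z *v y) = ((u \<bullet> y) / (u \<bullet> u)) *\<^sub>R w"
            unfolding wf_def stack_mult by (simp add: Zy)
          then have "N22 *v wf (stackIZ Z *v y) = 0" using w unfolding kerP_def
            by (simp add: matrix_vector_mult_scaleR)
          then show ?thesis by (simp add: BN)
        qed
        finally show ?thesis unfolding c_def by simp
      qed
      then show ?thesis unfolding Zzero_def by (simp add: matrix_eq)
    qed
    then have "Z \<in> Zplus M" using H by auto
    then have "0 < u \<bullet> ((transpose (stackIZ Z) ** M ** stackIZ Z) *v u)"
      using u unfolding Zplus_def pd_def by auto
    also have "\<dots> = (stackIZ Z *v u) \<bullet> (M *v (stackIZ Z *v u))" by (rule quad_transform)
    also have "stackIZ Z *v u = x" using u unfolding stack_mult x Zy by simp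
    finally show ?thesis .
  qed
  have nsdM22: "v \<bullet> (blk22 M *v v) \<le> 0" for v
  proof -
    have "0 \<le> v \<bullet> ((0 - blk22 M) *v v)" using M22 unfolding loewner_le_def psd_def by blast
    then show ?thesis by (simp add: neg_mv)
  qed
  have sM22: "transpose (blk22 M) = blk22 M" using sym_blk[OF sM] by simp
  have stepB: "M *v inrv v0 = 0" if v0: "v0 \<in> kerP" for v0
  proof -
    define e :: "real^('q+'r)" where "e = inrv v0"
    have kv: "t *\<^sub>R v0 \<in> kerP" for t using v0 unfolding kerP_def by (simp add: matrix_vector_mult_scaleR)
    have key: "e \<bullet> (M *v e) = 0 \<and> (inlv u - inrv (K *v u)) \<bullet> (M *v e) = 0" if u: "u \<noteq> 0" for u
    proof -
      define x0 where "x0 = inlv u - inrv (K *v u)"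
      have "0 < x0 \<bullet> (M *v x0) + (2 * (x0 \<bullet> (M *v e))) * t + (e \<bullet> (M *v e)) * t^2" for t
      proof -
        have "0 < (x0 + t *\<^sub>R e) \<bullet> (M *v (x0 + t *\<^sub>R e))"
          by (rule stepA[OF u kv[of t]]) (simp add: x0_def e_def algebra_simps)
        also have "(x0 + t *\<^sub>R e) \<bullet> (M *v (x0 + t *\<^sub>R e)) = x0 \<bullet> (M *v x0) + (2 * (x0 \<bullet> (M *v e))) * t + (e \<bullet> (M *v e)) * t^2"
        proof -
          have "e \<bullet> (M *v x0) = x0 \<bullet> (M *v e)" using sym_inner[OF tM, of e x0] by (simp add: inner_commute)
          then show ?thesis
            by (simp add: matrix_vector_right_distrib matrix_vector_mult_scaleR inner_add_left inner_add_right
                algebra_simps power2_eq_square)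
        qed
        finally show ?thesis .
      qed
      moreover have "e \<bullet> (M *v e) \<le> 0"
        using nsdM22[of v0] unfolding e_def by (simp add: inner_inr blk_mult)
      ultimately have "e \<bullet> (M *v e) = 0 \<and> 2 * (x0 \<bullet> (M *v e)) = 0" by (intro RL2) auto
      then show ?thesis unfolding x0_def by simp
    qed
    obtain i :: 'q where True by simp
    have "axis i 1 \<noteq> (0::real^'q)" by (simp add: axis_eq_0_iff)
    from key[OF this] have "e \<bullet> (M *v e) = 0" by simp
    then have "v0 \<bullet> (blk22 M *v v0) = 0" unfolding e_def by (simp add: inner_inr blk_mult)
    then have pr0: "prv (M *v e) = 0" using nsd_zero[OF sM22 nsdM22] unfolding e_def by (simp add: blk_mult)
    have pl0: "plv (M *v e) = 0"
    proof (rule ccontr)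
      assume ne: "plv (M *v e) \<noteq> 0"
      have "(inlv (plv (M *v e)) - inrv (K *v plv (M *v e))) \<bullet> (M *v e) = 0" using key[OF ne] by simp
      then have "plv (M *v e) \<bullet> plv (M *v e) = 0" using pr0 by (simp add: inner_diff_left inner_inl inner_inr)
      then show False using ne by simp
    qed
    have "M *v e = inlv (plv (M *v e)) + inrv (prv (M *v e))" by (rule decomp)
    then show ?thesis using pl0 pr0 unfolding e_def by simp
  qed
  have spanK: "span kerP = kerP" unfolding kerP_def using subspace_ker by simp
  have dec: "\<exists>v0 z. v0 \<in> kerP \<and> (\<forall>k\<in>kerP. z \<bullet> k = 0) \<and> prv x = v0 + z" for x
  proof -
    obtain p z where "p \<in> span kerP" "\<And>w. w \<in> span kerP \<Longrightarrow> orthogonal z w" "prv x = p + z"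
      using orthogonal_subspace_decomp_exists[of kerP "prv x"] by metis
    then show ?thesis using spanK unfolding orthogonal_def by auto
  qed
  define C where "C = {x :: real^('q+'r). norm x = 1 \<and> (\<forall>k\<in>kerP. inrv k \<bullet> x = 0)}"
  have CE: "x \<bullet> (N *v x) < 0 \<or> 0 < x \<bullet> (M *v x)" if "x \<in> C" for x
  proof (cases "x \<bullet> (N *v x) = 0")
    case False then show ?thesis using qN[of x] by simp
  next
    case True
    then have "wf x \<bullet> (N22 *v wf x) = 0" using BN by simp
    then have wk: "wf x \<in> kerP" unfolding kerP_def using nsd_zero[OF s22 nsd22] by simp
    show ?thesis
    proof (cases "plv x = 0")
      case True
      then have "prv x \<in> kerP" using wk unfolding wf_def by simp
      then have "inrv (prv x) \<bullet> x = 0" using that unfolding C_def by auto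
      then have "prv x = 0" by (simp add: inner_inr)
      then have "x = 0" using True decomp[of x] by simp
      then show ?thesis using that unfolding C_def by simp
    next
      case False
      have "0 < x \<bullet> (M *v x)"
        by (rule stepA[OF False wk]) (simp add: wf_def decomp[of x, symmetric])
      then show ?thesis by simp
    qed
  qed
  have compC: "compact C"
  proof -
    have "C = sphere 0 1 \<inter> (\<Inter>k\<in>kerP. {x. inrv k \<bullet> x = 0})" unfolding C_def by auto
    moreover have "closed (sphere 0 1 \<inter> (\<Inter>k\<in>kerP. {x. inrv k \<bullet> x = (0::real)}))"
      by (intro closed_Int closed_sphere closed_INT ballI closed_hyperplane)
    moreover have "bounded C" unfolding C_def bounded_iff by auto
    ultimately show ?thesis by (simp add: compact_eq_bounded_closed)
  qed
  define U where "U n = {x. 1 / real (Suc n) < x \<bullet> (M *v x) - real (Suc n) * (x \<bullet> (N *v x))}" for n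
  have openU: "open (U n)" for n
    unfolding U_def by (intro open_Collect_less continuous_intros)
  have cover: "C \<subseteq> (\<Union>n\<in>UNIV. U n)"
  proof
    fix x assume xC: "x \<in> C"
    define m where "m = x \<bullet> (M *v x)"
    define g where "g = - (x \<bullet> (N *v x))"
    have g0: "g \<ge> 0" unfolding g_def using qN[of x] by simp
    have "\<exists>n. 1 / real (Suc n) < m + real (Suc n) * g"
    proof (cases "g = 0")
      case True
      then have "0 < m" using CE[OF xC] unfolding m_def g_def by auto
      then obtain n where "inverse (real (Suc n)) < m" using reals_Archimedean by blast
      then show ?thesis using True by (auto simp: inverse_eq_divide)
    next
      case False
      then have gp: "g > 0" using g0 by simp
      obtain n where n: "(1 + \<bar>m\<bar>) / g < real n" using reals_Archimedean2 by blast
      have "1 + \<bar>m\<bar> < real n * g" using n gp by (simp add: field_simps)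
      then have "1 + \<bar>m\<bar> < real (Suc n) * g" using gp by (simp add: algebra_simps)
      moreover have "1 / real (Suc n) \<le> 1" by simp
      ultimately have "1 / real (Suc n) < m + real (Suc n) * g" by linarith
      then show ?thesis by blast
    qed
    then show "x \<in> (\<Union>n\<in>UNIV. U n)" unfolding U_def m_def g_def by auto
  qed
  obtain F where F0: "F \<subseteq> UNIV" and F: "finite F" "C \<subseteq> (\<Union>n\<in>F. U n)"
  proof (rule compactE_image[OF compC, of UNIV U])
    show "\<And>T. T \<in> UNIV \<Longrightarrow> open (U T)" using openU by blast
    show "C \<subseteq> (\<Union>c\<in>UNIV. U c)" using cover .
  qed
  define nn where "nn = Max (insert 0 F)"
  define a where "a = real (Suc nn)"
  have a1: "a \<ge> 1" unfolding a_def by simp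
  have bound: "1 / a < x \<bullet> (M *v x) - a * (x \<bullet> (N *v x))" if xC: "x \<in> C" for x
  proof -
    obtain n where n: "n \<in> F" "x \<in> U n" using F xC by blast
    have "n \<le> nn" unfolding nn_def using F n by simp
    then have le: "real (Suc n) \<le> a" unfolding a_def by simp
    have "1 / a \<le> 1 / real (Suc n)" using le by (simp add: frac_le)
    also have "\<dots> < x \<bullet> (M *v x) - real (Suc n) * (x \<bullet> (N *v x))" using n unfolding U_def by simp
    also have "\<dots> \<le> x \<bullet> (M *v x) - a * (x \<bullet> (N *v x))"
      using le qN[of x] by (simp add: mult_right_mono_neg)
    finally show ?thesis .
  qed
  have final: "0 \<le> x \<bullet> ((M - a *\<^sub>R N - betaI (1/a)) *v x)" for x
  proof -
    obtain v0 z where v0: "v0 \<in> kerP" and z: "\<forall>k\<in>kerP. z \<bullet> k = 0" and px: "prv x = v0 + z"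
      using dec by blast
    define x' where "x' = inlv (plv x) + inrv z"
    have xx: "x = x' + inrv v0" unfolding x'_def using decomp[of x] px by (simp add: algebra_simps)
    have eM: "x \<bullet> (M *v x) = x' \<bullet> (M *v x')" unfolding xx by (rule quad_inv[OF tM stepB[OF v0]])
    have eN: "x \<bullet> (N *v x) = x' \<bullet> (N *v x')" unfolding xx by (rule quad_inv[OF tN NkerP[OF v0]])
    have epl: "plv x = plv x'" unfolding x'_def by simp
    have ii: "x \<bullet> inlv (plv x') = plv x' \<bullet> plv x'"
      using inner_inl[of "plv x" x] epl by (simp add: inner_commute)
    have expand: "x \<bullet> ((M - a *\<^sub>R N - betaI (1/a)) *v x)
        = x' \<bullet> (M *v x') - a * (x' \<bullet> (N *v x')) - (1/a) * (plv x' \<bullet> plv x')"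
      using eM eN epl ii
      by (simp add: matrix_vector_mult_diff_rdistrib smult_mv betaI_mult inner_diff_right)
    show ?thesis
    proof (cases "x' = 0")
      case True then show ?thesis using expand by simp
    next
      case False
      define nx where "nx = norm x'"
      have nx: "nx > 0" unfolding nx_def using False by simp
      define y where "y = (1 / nx) *\<^sub>R x'"
      have yC: "y \<in> C" unfolding C_def
      proof (intro CollectI conjI ballI)
        show "norm y = 1" unfolding y_def nx_def using nx nx_def by simp
        fix k assume "k \<in> kerP"
        then show "inrv k \<bullet> y = 0" unfolding y_def x'_def using z
          by (simp add: inner_inr inner_commute)
      qed
      have sc: "y \<bullet> (A *v y) = (x' \<bullet> (A *v x')) / nx^2" for A :: "real^('q+'r)^('q+'r)"
        unfolding y_def by (simp add: matrix_vector_mult_scaleR power2_eq_square)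
      have "1 / a < (x' \<bullet> (M *v x') - a * (x' \<bullet> (N *v x'))) / nx^2"
        using bound[OF yC] by (simp add: sc diff_divide_distrib)
      then have "nx^2 / a < x' \<bullet> (M *v x') - a * (x' \<bullet> (N *v x'))"
        using nx by (simp add: field_simps)
      moreover have "plv x' \<bullet> plv x' \<le> nx^2"
        unfolding nx_def power2_norm_eq_inner using inner_split[of x' x'] by simp
      then have "(1/a) * (plv x' \<bullet> plv x') \<le> nx^2 / a" using a1 by (simp add: divide_right_mono)
      ultimately show ?thesis using expand by linarith
    qed
  qed
  show ?thesis
  proof (intro exI conjI)
    show "a \<ge> 0" using a1 by simp
    show "1 / a > 0" using a1 by simp
    show "loewner_le (betaI (1 / a)) (M - a *\<^sub>R N)"
      unfolding loewner_le_def psd_def using final by simp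
  qed
qed




lemma suff_dir:
  fixes M N :: "real^('q::finite + 'r::finite)^('q + 'r)"
  assumes b: "\<beta> > 0" and L: "loewner_le (betaI \<beta>) (M - \<alpha> *\<^sub>R N)"
  shows "Zzero N \<subseteq> Zplus M"
proof
  fix Z assume Z: "Z \<in> Zzero N"
  show "Z \<in> Zplus M" unfolding Zplus_def pd_def
  proof (intro CollectI allI impI)
    fix y :: "real^'q" assume y: "y \<noteq> 0"
    define x where "x = stackIZ Z *v y"
    have "0 \<le> x \<bullet> ((M - \<alpha> *\<^sub>R N - betaI \<beta>) *v x)" using L unfolding loewner_le_def psd_def by blast
    moreover have "x \<bullet> (N *v x) = 0"
    proof -
      have "y \<bullet> ((transpose (stackIZ Z) ** N ** stackIZ Z) *v y) = 0" using Z unfolding Zzero_def by simp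
      then show ?thesis unfolding x_def by (simp add: quad_transform)
    qed
    moreover have "plv x = y" unfolding x_def stack_mult by simp
    moreover have "x \<bullet> inlv (plv x) = plv x \<bullet> plv x"
      using inner_inl[of "plv x" x] by (simp add: inner_commute)
    ultimately have "\<beta> * (y \<bullet> y) \<le> x \<bullet> (M *v x)"
      by (simp add: matrix_vector_mult_diff_rdistrib smult_mv betaI_mult inner_diff_right)
    moreover have "0 < \<beta> * (y \<bullet> y)" using b y by simp
    ultimately have "0 < x \<bullet> (M *v x)" by linarith
    then show "0 < y \<bullet> ((transpose (stackIZ Z) ** M ** stackIZ Z) *v y)"
      unfolding x_def by (simp add: quad_transform)
  qed
qed

theorem mainTheorem12:
  fixes M N :: "real^('q::finite + 'r::finite)^('q + 'r)"
  assumes "sym_mat M" and "sym_mat N"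
  shows "((\<exists>\<alpha>::real. \<exists>\<beta>::real. \<beta> > 0 \<and> loewner_le (betaI \<beta>) (M - \<alpha> *\<^sub>R N))
            \<longrightarrow> Zzero N \<subseteq> Zplus M)
       \<and> ((N \<in> PiSet \<and> schur N = 0 \<and> loewner_le (blk22 M) 0) \<longrightarrow>
            (Zzero N \<subseteq> Zplus M \<longleftrightarrow>
              (\<exists>\<alpha>::real. \<exists>\<beta>::real. \<alpha> \<ge> 0 \<and> \<beta> > 0 \<and> loewner_le (betaI \<beta>) (M - \<alpha> *\<^sub>R N))))"
  using suff_dir[of _ M _ N] main_dir[OF assms] by blast


end
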